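(* Let $n\ge1$, $D\ge1$, and let $X_n=\{\mathbf{x}^0,\ldots,\mathbf{x}^{n-1}\}\subseteq\{0,1\}^D$ consist of $n$ pairwise distinct vectors, indexed so that $\mathbf{a}\cdot\mathbf{x}^0<\cdots<\mathbf{a}\cdot\mathbf{x}^{n-1}$ for some $\mathbf{a}\in\mathbb{Z}^D$. Then there is a three-layer Boolean threshold network with $D$ input nodes, $n$ nodes in the second layer and $\lceil\log_2 n\rceil$ output nodes that maps $\mathbf{x}^i$ to the $\lceil\log_2 n\rceil$-dimensional binary representation of $i$, for every $i=0,\ldots,n-1$.
   Context: A Boolean threshold function is a map $\{0,1\}^h\to\{0,1\}$, $\mathbf{u}\mapsto[\mathbf{w}\cdot\mathbf{u}\ge\theta]$ (value $1$ iff $\mathbf{w}\cdot\mathbf{u}\ge\theta$) with $\mathbf{w}\in\mathbb{Z}^h,\theta\in\mathbb{Z}$. An $L$-layer Boolean threshold network has layers $1,\ldots,L$; layer $1$ is the input; each node of layer $t+1$ computes a Boolean threshold function of the values of layer $t$; the network computes the map input $\mapsto$ values of layer $L$. *)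

theory Defs
  imports Complex_Main
begin

text \<open>Boolean vectors in {0,1}^h are bool lists of length h; integer vectors are int lists.\<close>

definition bdot :: "int list \<Rightarrow> bool list \<Rightarrow> int" where
  "bdot w u = (\<Sum>j<length u. w ! j * of_bool (u ! j))"

type_synonym tnode = "int list \<times> int"

definition eval_node :: "tnode \<Rightarrow> bool list \<Rightarrow> bool" where
  "eval_node nd u = (bdot (fst nd) u \<ge> snd nd)"

definition eval_layer :: "tnode list \<Rightarrow> bool list \<Rightarrow> bool list" where
  "eval_layer L u = map (\<lambda>nd. eval_node nd u) L"

definition wf_layer :: "nat \<Rightarrow> nat \<Rightarrow> tnode list \<Rightarrow> bool" where
  "wf_layer h k L \<longleftrightarrow> length L = k \<and> (\<forall>nd\<in>set L. length (fst nd) = h)"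

definition three_layer_net :: "nat \<Rightarrow> nat \<Rightarrow> nat \<Rightarrow> tnode list \<Rightarrow> tnode list \<Rightarrow> bool" where
  "three_layer_net D k2 k3 L2 L3 \<longleftrightarrow> wf_layer D k2 L2 \<and> wf_layer k2 k3 L3"

definition eval_net3 :: "tnode list \<Rightarrow> tnode list \<Rightarrow> bool list \<Rightarrow> bool list" where
  "eval_net3 L2 L3 u = eval_layer L3 (eval_layer L2 u)"

text \<open>m-bit binary representation of i, most significant bit first.\<close>
definition bin_rep :: "nat \<Rightarrow> nat \<Rightarrow> bool list" where
  "bin_rep m i = map (\<lambda>k. odd (i div 2 ^ (m - 1 - k))) [0..<m]"

end

theory Submission
  imports Defs
begin

definition wgt :: "(nat \<Rightarrow> bool) \<Rightarrow> nat \<Rightarrow> int" where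
  "wgt g i = of_bool (g i) - (if i = 0 then 0 else of_bool (g (i - 1)))"

lemma tele: "(\<Sum>i<Suc j. wgt g i) = of_bool (g j)"
  by (induction j) (auto simp: wgt_def)

lemma sum_thermo:
  assumes "j < n"
  shows "(\<Sum>i<n. wgt g i * of_bool (i \<le> j)) = of_bool (g j)"
proof -
  have "(\<Sum>i<n. wgt g i * of_bool (i \<le> j)) = (\<Sum>i\<in>{..<n} \<inter> {i. i \<le> j}. wgt g i)"
    by (auto simp add: sum.inter_restrict of_bool_def intro!: sum.cong)
  also have "{..<n} \<inter> {i. i \<le> j} = {..<Suc j}" using assms by auto
  finally show ?thesis using tele by simp
qed

theorem theorem14:
  fixes n D :: nat and x :: "nat \<Rightarrow> bool list" and a :: "int list"
  assumes "n \<ge> 1" and "D \<ge> 1"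
    and "\<forall>i<n. length (x i) = D"
    and "\<forall>i<n. \<forall>j<n. i \<noteq> j \<longrightarrow> x i \<noteq> x j"
    and "length a = D"
    and "\<forall>i j. i < j \<and> j < n \<longrightarrow> bdot a (x i) < bdot a (x j)"
  shows "\<exists>L2 L3. three_layer_net D n (nat \<lceil>log 2 (real n)\<rceil>) L2 L3 \<and>
           (\<forall>i<n. eval_net3 L2 L3 (x i) = bin_rep (nat \<lceil>log 2 (real n)\<rceil>) i)"
proof -
  define m where "m = nat \<lceil>log 2 (real n)\<rceil>"
  define g where "g k i = odd (i div 2 ^ (m - 1 - k))" for k i :: nat
  define L2 where "L2 = map (\<lambda>i. (a, bdot a (x i))) [0..<n]"
  define L3 where "L3 = map (\<lambda>k. (map (\<lambda>i. wgt (g k) i) [0..<n], 1::int)) [0..<m]"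
  have net: "three_layer_net D n m L2 L3"
    unfolding three_layer_net_def wf_layer_def L2_def L3_def using assms(5) by auto
  have l2: "eval_layer L2 (x j) = map (\<lambda>i. i \<le> j) [0..<n]" if "j < n" for j
  proof -
    have "(bdot a (x i) \<le> bdot a (x j)) = (i \<le> j)" if "i < n" for i
    proof (cases "i \<le> j")
      case True
      then show ?thesis using assms(6) \<open>j < n\<close>
        by (cases "i = j") (auto intro: less_imp_le)
    next
      case False
      then have "bdot a (x j) < bdot a (x i)" using assms(6) \<open>i < n\<close> by auto
      then show ?thesis using False by auto
    qed
    then show ?thesis unfolding eval_layer_def L2_def eval_node_def by auto
  qed
  have out: "eval_net3 L2 L3 (x j) = bin_rep m j" if "j < n" for j
  proof -
    have "eval_node (map (wgt (g k)) [0..<n], 1) (map (\<lambda>i. i \<le> j) [0..<n]) = g k j" for k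
    proof -
      have "bdot (map (wgt (g k)) [0..<n]) (map (\<lambda>i. i \<le> j) [0..<n])
          = (\<Sum>i<n. wgt (g k) i * of_bool (i \<le> j))"
        unfolding bdot_def by simp
      also have "\<dots> = of_bool (g k j)" using sum_thermo[OF that] .
      finally show ?thesis unfolding eval_node_def by simp
    qed
    then show ?thesis
      unfolding eval_net3_def l2[OF that] unfolding eval_layer_def L3_def bin_rep_def g_def
      by simp
  qed
  show ?thesis using net out unfolding m_def by blast
qed

end
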